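(* Fix $i\in\{1,\dots,k\}$ and let $\psi_i$ and $\mathcal{M}^\psi_i$ be defined as in the context. Then $|\mathcal{M}^\psi_i|\le 2\epsilon\cdot 2^{kn}$.
   Context: Setting. $\mathcal{N}$ is a directed network containing nodes $s_1,\dots,s_k,t_1,\dots,t_k$. The network $\mathcal{G}$ is obtained from $\mathcal{N}$ by adding new nodes $s,t,A_1,\dots,A_k,B_1,\dots,B_k$ and, for each $i$, the unit-capacity edges $a_i=(s,A_i)$, two parallel edges $x_i,y_i$ from $A_i$ to $B_i$, $z_i=(A_i,s_i)$, $z'_i=(t_i,B_i)$, and $b_i=(B_i,t)$; the incoming edges of $t$ are exactly $b_1,\dots,b_k$. Admissible error patterns $\boldsymbol r=(r_e)$ are those in which at most one edge $e$ has $r_e\neq0$, with $e\notin\{a_1,\dots,a_k,b_1,\dots,b_k\}$. The output of an edge is its input XOR $r_e$. Let $\mathcal{C}$ be a length-$n$ network code on $\mathcal{G}$. The source $s$ has message $m\in\mathcal{M}=[2^{kn}]$, where $[N]=\{1,\dots,N\}$. An edge $e=(u,v)$ of capacity $c_e$ carries a value in $[2^{nc_e}]$ computed from the signals on the incoming edges of $u$ (and from $m$ if $u=s$). The terminal $t$ decodes the tuple received on $b_1,\dots,b_k$ to an estimate of $m$. For an edge $e$, let $e(m,\boldsymbol r)$ denote the signal received on $e$ when message $m$ is sent and error pattern $\boldsymbol r$ occurs, and let $e(m)=e(m,\boldsymbol 0)$. Write $\boldsymbol b(m)=(b_1(m),\dots,b_k(m))$. Let $\mathcal{M}^{\text{good}}$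 be the set of messages $m$ such that $t$ decodes to $m$ under every admissible error pattern when $m$ is sent. Assume $\epsilon\ge0$ and $|\mathcal{M}^{\text{good}}|\ge(1-\epsilon)2^{kn}$. Define $\psi_i:[2^n]\to[2^n]$ by letting $\psi_i(\hat z)$ be a value $\hat b$ maximizing $|\{m\in\mathcal{M}^{\text{good}}: z'_i(m)=\hat z,\ b_i(m)=\hat b\}|$, with ties broken arbitrarily. Let $\mathcal{M}^\psi_i=\{m\in\mathcal{M}^{\text{good}}:\psi_i(z'_i(m))\ne b_i(m)\}$. *)

theory Defs
  imports Complex_Main
begin

definition special_edges :: "nat \<Rightarrow> (nat \<Rightarrow> 'e) \<Rightarrow> (nat \<Rightarrow> 'e) \<Rightarrow> (nat \<Rightarrow> 'e)
    \<Rightarrow> (nat \<Rightarrow> 'e) \<Rightarrow> (nat \<Rightarrow> 'e) \<Rightarrow> (nat \<Rightarrow> 'e) \<Rightarrow> 'e set" where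
  "special_edges k a x y z z' b =
     a ` {1..k} \<union> x ` {1..k} \<union> y ` {1..k} \<union> z ` {1..k} \<union> z' ` {1..k} \<union> b ` {1..k}"

definition G_edges :: "'e set \<Rightarrow> nat \<Rightarrow> (nat \<Rightarrow> 'e) \<Rightarrow> (nat \<Rightarrow> 'e) \<Rightarrow> (nat \<Rightarrow> 'e)
    \<Rightarrow> (nat \<Rightarrow> 'e) \<Rightarrow> (nat \<Rightarrow> 'e) \<Rightarrow> (nat \<Rightarrow> 'e) \<Rightarrow> 'e set" where
  "G_edges EN k a x y z z' b = EN \<union> special_edges k a x y z z' b"

text \<open>G is acyclic (as is standard, so that signals of a network code are well defined).\<close>
definition extended_network ::
  "'v set \<Rightarrow> 'e set \<Rightarrow> ('e \<Rightarrow> 'v) \<Rightarrow> ('e \<Rightarrow> 'v) \<Rightarrow> ('e \<Rightarrow> nat) \<Rightarrow> nat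
   \<Rightarrow> 'v \<Rightarrow> 'v \<Rightarrow> (nat \<Rightarrow> 'v) \<Rightarrow> (nat \<Rightarrow> 'v) \<Rightarrow> (nat \<Rightarrow> 'v) \<Rightarrow> (nat \<Rightarrow> 'v)
   \<Rightarrow> (nat \<Rightarrow> 'e) \<Rightarrow> (nat \<Rightarrow> 'e) \<Rightarrow> (nat \<Rightarrow> 'e) \<Rightarrow> (nat \<Rightarrow> 'e) \<Rightarrow> (nat \<Rightarrow> 'e) \<Rightarrow> (nat \<Rightarrow> 'e)
   \<Rightarrow> bool" where
  "extended_network VN EN tailv headv cap k s t A B sN tN a x y z z' b \<longleftrightarrow>
     finite VN \<and> finite EN \<and> (\<forall>e\<in>EN. tailv e \<in> VN \<and> headv e \<in> VN)
   \<and> (\<forall>j\<in>{1..k}. sN j \<in> VN \<and> tN j \<in> VN)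
   \<and> s \<notin> VN \<and> t \<notin> VN \<and> s \<noteq> t
   \<and> (\<forall>j\<in>{1..k}. A j \<notin> VN \<and> B j \<notin> VN \<and> A j \<noteq> s \<and> A j \<noteq> t \<and> B j \<noteq> s \<and> B j \<noteq> t)
   \<and> inj_on A {1..k} \<and> inj_on B {1..k} \<and> A ` {1..k} \<inter> B ` {1..k} = {}
   \<and> card (special_edges k a x y z z' b) = 6 * k
   \<and> special_edges k a x y z z' b \<inter> EN = {}
   \<and> (\<forall>j\<in>{1..k}.
        tailv (a j) = s \<and> headv (a j) = A j \<and> tailv (x j) = A j \<and> headv (x j) = B j
      \<and> tailv (y j) = A j \<and> headv (y j) = B j \<and> tailv (z j) = A j \<and> headv (z j) = sN j
      \<and> tailv (z' j) = tN j \<and> headv (z' j) = B j \<and> tailv (b j) = B j \<and> headv (b j) = t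
      \<and> cap (a j) = 1 \<and> cap (x j) = 1 \<and> cap (y j) = 1 \<and> cap (z j) = 1
      \<and> cap (z' j) = 1 \<and> cap (b j) = 1)
   \<and> acyclic {(tailv e, headv e) | e. e \<in> G_edges EN k a x y z z' b}"

text \<open>A length-n network code: edge e (capacity cap e) carries a value in {0..<2^(n*cap e)}
  (bit strings, identified with [2^(n cap e)]) computed by enc e from the signals on the incoming
  edges of its tail node, and from the message m only if the tail is the source s.\<close>
definition network_code ::
  "'e set \<Rightarrow> ('e \<Rightarrow> 'v) \<Rightarrow> ('e \<Rightarrow> 'v) \<Rightarrow> ('e \<Rightarrow> nat) \<Rightarrow> nat \<Rightarrow> 'v
   \<Rightarrow> ('e \<Rightarrow> ('e \<Rightarrow> nat) \<Rightarrow> nat \<Rightarrow> nat) \<Rightarrow> bool" where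
  "network_code EG tailv headv cap n s enc \<longleftrightarrow>
     (\<forall>e\<in>EG. \<forall>f m. enc e f m < 2 ^ (n * cap e))
   \<and> (\<forall>e\<in>EG. \<forall>f g m m'. (\<forall>d\<in>EG. headv d = tailv e \<longrightarrow> f d = g d) \<and> (tailv e \<noteq> s \<or> m = m')
        \<longrightarrow> enc e f m = enc e g m')"

definition is_signal ::
  "'e set \<Rightarrow> ('e \<Rightarrow> ('e \<Rightarrow> nat) \<Rightarrow> nat \<Rightarrow> nat) \<Rightarrow> (nat \<Rightarrow> ('e \<Rightarrow> nat) \<Rightarrow> 'e \<Rightarrow> nat) \<Rightarrow> bool" where
  "is_signal EG enc sig \<longleftrightarrow>
     (\<forall>m r. \<forall>e\<in>EG. sig m r e = Bit_Operations.xor (enc e (sig m r) m) (r e))"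

text \<open>Admissible error patterns: at most one edge carries a nonzero error, which is an edge of G
  not in the forbidden set Forb (the edges a_j, b_j), with value fitting the edge.\<close>
definition admissible ::
  "'e set \<Rightarrow> 'e set \<Rightarrow> ('e \<Rightarrow> nat) \<Rightarrow> nat \<Rightarrow> ('e \<Rightarrow> nat) \<Rightarrow> bool" where
  "admissible EG Forb cap n r \<longleftrightarrow>
     (\<forall>e. r e \<noteq> 0 \<longrightarrow> e \<in> EG \<and> e \<notin> Forb \<and> r e < 2 ^ (n * cap e))
   \<and> (\<forall>e e'. r e \<noteq> 0 \<longrightarrow> r e' \<noteq> 0 \<longrightarrow> e = e')"

definition good_msgs ::
  "nat \<Rightarrow> nat \<Rightarrow> 'e set \<Rightarrow> 'e set \<Rightarrow> ('e \<Rightarrow> nat) \<Rightarrow> (nat \<Rightarrow> 'e)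
   \<Rightarrow> (nat \<Rightarrow> ('e \<Rightarrow> nat) \<Rightarrow> 'e \<Rightarrow> nat) \<Rightarrow> (nat list \<Rightarrow> nat) \<Rightarrow> nat set" where
  "good_msgs k n EG Forb cap b sig dec =
     {m \<in> {..<2 ^ (k * n)}. \<forall>r. admissible EG Forb cap n r \<longrightarrow>
        dec (map (\<lambda>j. sig m r (b j)) [1..<k+1]) = m}"

end

theory Submission
  imports Defs
begin

lemma xor_lt: "(a::nat) < 2^n \<Longrightarrow> b < 2^n \<Longrightarrow> Bit_Operations.xor a b < 2^n"
  by (metis take_bit_nat_eq_self_iff take_bit_xor)

lemma sig_agree:
  assumes wfR: "wf {(d,e). d \<in> EG \<and> e \<in> EG \<and> headv d = tailv e}"
    and loc: "\<forall>e\<in>EG. \<forall>f g. (\<forall>d\<in>EG. headv d = tailv e \<longrightarrow> f d = g d) \<longrightarrow> enc e f m = enc e g m"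
    and s1: "\<forall>e\<in>EG. fa e = Bit_Operations.xor (enc e fa m) (ra e)"
    and s2: "\<forall>e\<in>EG. fb e = Bit_Operations.xor (enc e fb m) (rb e)"
    and D: "\<forall>e\<in>EG - D. ra e = rb e \<and> (\<forall>d\<in>EG. headv d = tailv e \<longrightarrow> d \<notin> D)"
  shows "e \<in> EG - D \<Longrightarrow> fa e = fb e"
proof (induction e rule: wf_induct[OF wfR])
  case (1 e)
  have eq: "\<forall>d\<in>EG. headv d = tailv e \<longrightarrow> fa d = fb d"
    using 1 D by auto
  have "enc e fa m = enc e fb m" using loc eq 1(2) by auto
  then show ?case using s1 s2 D 1(2) by auto
qed

theorem lemma1:
  fixes VN :: "'v set" and EN :: "'e set" and tailv headv :: "'e \<Rightarrow> 'v" and cap :: "'e \<Rightarrow> nat"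
    and k n i :: nat and s t :: 'v and A B sN tN :: "nat \<Rightarrow> 'v"
    and a x y z z' b :: "nat \<Rightarrow> 'e"
    and enc :: "'e \<Rightarrow> ('e \<Rightarrow> nat) \<Rightarrow> nat \<Rightarrow> nat"
    and sig :: "nat \<Rightarrow> ('e \<Rightarrow> nat) \<Rightarrow> 'e \<Rightarrow> nat"
    and dec :: "nat list \<Rightarrow> nat" and eps :: real and psi :: "nat \<Rightarrow> nat"
  defines "EG \<equiv> G_edges EN k a x y z z' b"
    and "Good \<equiv> good_msgs k n (G_edges EN k a x y z z' b) (a ` {1..k} \<union> b ` {1..k}) cap b sig dec"
  assumes G: "extended_network VN EN tailv headv cap k s t A B sN tN a x y z z' b"
    and code: "network_code EG tailv headv cap n s enc"
    and sig: "is_signal EG enc sig"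
    and eps: "eps \<ge> 0"
    and good_large: "real (card Good) \<ge> (1 - eps) * 2 ^ (k * n)"
    and i: "i \<in> {1..k}"
    and psi: "\<forall>zh < 2 ^ n. psi zh < 2 ^ n \<and>
       (\<forall>bh < 2 ^ n. card {m \<in> Good. sig m (\<lambda>_. 0) (z' i) = zh \<and> sig m (\<lambda>_. 0) (b i) = bh}
          \<le> card {m \<in> Good. sig m (\<lambda>_. 0) (z' i) = zh \<and> sig m (\<lambda>_. 0) (b i) = psi zh})"
  shows "real (card {m \<in> Good. psi (sig m (\<lambda>_. 0) (z' i)) \<noteq> sig m (\<lambda>_. 0) (b i)})
           \<le> 2 * eps * 2 ^ (k * n)"
proof -
  let ?K = "{1..k}"
  let ?Forb = "a ` {1..k} \<union> b ` {1..k}"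
  let ?SE = "special_edges k a x y z z' b"
  note GD = G[unfolded extended_network_def]
  have finVN: "finite VN" and finEN: "finite EN" using GD by auto
  have ENv: "\<forall>e\<in>EN. tailv e \<in> VN \<and> headv e \<in> VN" using GD by blast
  have sNtN: "\<forall>j\<in>?K. sN j \<in> VN \<and> tN j \<in> VN" using GD by blast
  have st: "s \<notin> VN" "t \<notin> VN" "s \<noteq> t" using GD by auto
  have AB: "\<forall>j\<in>?K. A j \<notin> VN \<and> B j \<notin> VN \<and> A j \<noteq> s \<and> A j \<noteq> t \<and> B j \<noteq> s \<and> B j \<noteq> t"
    using GD by blast
  have injB: "inj_on B ?K" and ABdisj: "A ` ?K \<inter> B ` ?K = {}" using GD by auto
  have cardSE: "card ?SE = 6 * k" using GD by blast
  have edges: "\<forall>j\<in>?K.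
        tailv (a j) = s \<and> headv (a j) = A j \<and> tailv (x j) = A j \<and> headv (x j) = B j
      \<and> tailv (y j) = A j \<and> headv (y j) = B j \<and> tailv (z j) = A j \<and> headv (z j) = sN j
      \<and> tailv (z' j) = tN j \<and> headv (z' j) = B j \<and> tailv (b j) = B j \<and> headv (b j) = t
      \<and> cap (a j) = 1 \<and> cap (x j) = 1 \<and> cap (y j) = 1 \<and> cap (z j) = 1
      \<and> cap (z' j) = 1 \<and> cap (b j) = 1" using GD by blast
  have acyc: "acyclic {(tailv e, headv e) | e. e \<in> EG}" using GD unfolding EG_def by blast
  have EGeq: "EG = EN \<union> ?SE" unfolding EG_def G_edges_def by simp
  have finEG: "finite EG" unfolding EGeq special_edges_def using finEN by auto
  have inEG: "\<forall>j\<in>?K. a j \<in> EG \<and> x j \<in> EG \<and> y j \<in> EG \<and> z j \<in> EG \<and> z' j \<in> EG \<and> b j \<in> EG"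
    unfolding EGeq special_edges_def by auto
  have EGcases: "\<And>e. e \<in> EG \<Longrightarrow> e \<in> EN \<or> (\<exists>j\<in>?K. e = a j \<or> e = x j \<or> e = y j \<or> e = z j \<or> e = z' j \<or> e = b j)"
    unfolding EGeq special_edges_def by auto
  have Ai: "A i \<notin> VN" "A i \<noteq> s" "A i \<noteq> t" "B i \<notin> VN" "B i \<noteq> s" "B i \<noteq> t"
    using AB i by auto
  have AiBi: "A i \<noteq> B i" using ABdisj i by (metis IntI emptyE image_eqI)
  have Ei: "tailv (a i) = s" "headv (a i) = A i" "tailv (x i) = A i" "headv (x i) = B i"
      "tailv (y i) = A i" "headv (y i) = B i" "tailv (z' i) = tN i" "headv (z' i) = B i"
      "tailv (b i) = B i" "headv (b i) = t" "cap (x i) = 1" "cap (y i) = 1" "cap (z' i) = 1"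
    using edges i by auto
  have tNi: "tN i \<in> VN" using sNtN i by auto
  have inEGi: "a i \<in> EG" "x i \<in> EG" "y i \<in> EG" "z' i \<in> EG" "b i \<in> EG" using inEG i by auto
  have inB: "\<forall>d\<in>EG. headv d = B i \<longrightarrow> d = x i \<or> d = y i \<or> d = z' i"
  proof (intro ballI impI)
    fix d assume d: "d \<in> EG" "headv d = B i"
    show "d = x i \<or> d = y i \<or> d = z' i"
    proof (cases "d \<in> EN")
      case True then show ?thesis using ENv d Ai(4) by metis
    next
      case False
      then obtain j where j: "j \<in> ?K" "d = a j \<or> d = x j \<or> d = y j \<or> d = z j \<or> d = z' j \<or> d = b j"
        using EGcases d by blast
      have ej: "headv (a j) = A j" "headv (x j) = B j" "headv (y j) = B j" "headv (z j) = sN j"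
        "headv (z' j) = B j" "headv (b j) = t" using edges j by auto
      have "A j \<noteq> B i" using ABdisj j i by (metis IntI emptyE image_eqI)
      moreover have "sN j \<noteq> B i" using sNtN j Ai(4) by metis
      moreover have "B j = B i \<Longrightarrow> j = i" using injB j i by (auto dest: inj_onD)
      ultimately show ?thesis using j(2) ej d(2) Ai(6) by metis
    qed
  qed
  have noin_s: "\<forall>d\<in>EG. headv d \<noteq> s"
  proof
    fix d assume d: "d \<in> EG"
    show "headv d \<noteq> s"
    proof (cases "d \<in> EN")
      case True then show ?thesis using ENv d st by auto
    next
      case False
      then obtain j where j: "j \<in> ?K" "d = a j \<or> d = x j \<or> d = y j \<or> d = z j \<or> d = z' j \<or> d = b j"
        using EGcases d by blast
      have ej: "headv (a j) = A j" "headv (x j) = B j" "headv (y j) = B j" "headv (z j) = sN j"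
        "headv (z' j) = B j" "headv (b j) = t" using edges j(1) by auto
      have "A j \<noteq> s" "B j \<noteq> s" "sN j \<in> VN" using AB sNtN j(1) by auto
      then show ?thesis using j(2) ej st by auto
    qed
  qed
  have noout_t: "\<forall>e\<in>EG. tailv e \<noteq> t"
  proof
    fix d assume d: "d \<in> EG"
    show "tailv d \<noteq> t"
    proof (cases "d \<in> EN")
      case True then show ?thesis using ENv d st by auto
    next
      case False
      then obtain j where j: "j \<in> ?K" "d = a j \<or> d = x j \<or> d = y j \<or> d = z j \<or> d = z' j \<or> d = b j"
        using EGcases d by blast
      have ej: "tailv (a j) = s" "tailv (x j) = A j" "tailv (y j) = A j" "tailv (z j) = A j"
        "tailv (z' j) = tN j" "tailv (b j) = B j" using edges j(1) by auto
      have "A j \<noteq> t" "B j \<noteq> t" "tN j \<in> VN" using AB sNtN j(1) by auto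
      then show ?thesis using j(2) ej st by auto
    qed
  qed
  have outB: "\<forall>e\<in>EG. tailv e = B i \<longrightarrow> e = b i"
  proof (intro ballI impI)
    fix d assume d: "d \<in> EG" "tailv d = B i"
    show "d = b i"
    proof (cases "d \<in> EN")
      case True then show ?thesis using ENv d Ai(4) by metis
    next
      case False
      then obtain j where j: "j \<in> ?K" "d = a j \<or> d = x j \<or> d = y j \<or> d = z j \<or> d = z' j \<or> d = b j"
        using EGcases d by blast
      have ej: "tailv (a j) = s" "tailv (x j) = A j" "tailv (y j) = A j" "tailv (z j) = A j"
        "tailv (z' j) = tN j" "tailv (b j) = B j" using edges j by auto
      have "A j \<noteq> B i" using ABdisj j i by (metis IntI emptyE image_eqI)
      moreover have "tN j \<noteq> B i" using sNtN j Ai(4) by metis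
      moreover have "B j = B i \<Longrightarrow> j = i" using injB j i by (auto dest: inj_onD)
      ultimately show ?thesis using j(2) ej d(2) Ai(5) by metis
    qed
  qed
  have xy: "x i \<noteq> y i"
  proof
    assume eq: "x i = y i"
    have fK: "finite ?K" by simp
    have ky: "card (y ` (?K - {i})) \<le> k - 1"
      using card_image_le[of "?K - {i}" y] i by simp
    have SE2: "?SE = a ` ?K \<union> x ` ?K \<union> y ` (?K - {i}) \<union> z ` ?K \<union> z' ` ?K \<union> b ` ?K"
    proof -
      have "y ` ?K = y ` (?K - {i}) \<union> {x i}" using eq i by auto
      moreover have "x i \<in> x ` ?K" using i by auto
      ultimately show ?thesis unfolding special_edges_def by auto
    qed
    have c1: "card (a ` ?K) \<le> k" "card (x ` ?K) \<le> k" "card (z ` ?K) \<le> k" "card (z' ` ?K) \<le> k"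
      "card (b ` ?K) \<le> k"
      using card_image_le[OF fK] by (metis card_atLeastAtMost diff_Suc_1)+
    have "card ?SE \<le> card (a ` ?K) + card (x ` ?K) + card (y ` (?K - {i})) + card (z ` ?K)
        + card (z' ` ?K) + card (b ` ?K)"
      unfolding SE2
      using card_Un_le[of "a ` ?K \<union> x ` ?K \<union> y ` (?K - {i}) \<union> z ` ?K \<union> z' ` ?K" "b ` ?K"]
        card_Un_le[of "a ` ?K \<union> x ` ?K \<union> y ` (?K - {i}) \<union> z ` ?K" "z' ` ?K"]
        card_Un_le[of "a ` ?K \<union> x ` ?K \<union> y ` (?K - {i})" "z ` ?K"]
        card_Un_le[of "a ` ?K \<union> x ` ?K" "y ` (?K - {i})"]
        card_Un_le[of "a ` ?K" "x ` ?K"] by linarith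
    moreover have "k \<ge> 1" using i by auto
    ultimately show False using cardSE c1 ky by linarith
  qed
  let ?E = "{(tailv e, headv e) | e. e \<in> EG}"
  have finE: "finite ?E" using finEG by auto
  have wfE: "wf ?E" using finite_acyclic_wf[OF finE acyc] .
  have wfR: "wf {(d,e). d \<in> EG \<and> e \<in> EG \<and> headv d = tailv e}"
  proof (rule wf_subset[OF wf_inv_image[OF wfE, of tailv]])
    show "{(d,e). d \<in> EG \<and> e \<in> EG \<and> headv d = tailv e} \<subseteq> inv_image ?E tailv"
      unfolding inv_image_def by force
  qed
  have loc: "\<And>e f g m m'. e \<in> EG \<Longrightarrow> (\<forall>d\<in>EG. headv d = tailv e \<longrightarrow> f d = g d) \<Longrightarrow>
      (tailv e \<noteq> s \<or> m = m') \<Longrightarrow> enc e f m = enc e g m'"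
    using code unfolding network_code_def by blast
  have encb: "\<And>e f m. e \<in> EG \<Longrightarrow> enc e f m < 2 ^ (n * cap e)"
    using code unfolding network_code_def by blast
  have sigeq: "\<And>m r e. e \<in> EG \<Longrightarrow> sig m r e = Bit_Operations.xor (enc e (sig m r) m) (r e)"
    using sig unfolding is_signal_def by blast
  have sig0: "\<And>m e. e \<in> EG \<Longrightarrow> sig m (\<lambda>_. 0) e = enc e (sig m (\<lambda>_. 0)) m"
    using sigeq by simp
  have adm0: "admissible EG ?Forb cap n (\<lambda>_. 0)" unfolding admissible_def by simp
  have lt_x: "\<And>m. sig m (\<lambda>_. 0) (x i) < 2 ^ n" using sig0[OF inEGi(2)] encb[OF inEGi(2)] Ei(11) by simp
  have lt_y: "\<And>m. sig m (\<lambda>_. 0) (y i) < 2 ^ n" using sig0[OF inEGi(3)] encb[OF inEGi(3)] Ei(12) by simp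
  have lt_z: "\<And>m. sig m (\<lambda>_. 0) (z' i) < 2 ^ n" using sig0[OF inEGi(4)] encb[OF inEGi(4)] Ei(13) by simp
  have lt_b: "\<And>m r j. admissible EG ?Forb cap n r \<Longrightarrow> j \<in> ?K \<Longrightarrow> sig m r (b j) < 2 ^ n"
  proof -
    fix m r j assume r: "admissible EG ?Forb cap n r" and j: "j \<in> ?K"
    have "r (b j) = 0" using r j unfolding admissible_def by blast
    moreover have "enc (b j) (sig m r) m < 2 ^ n" using encb[of "b j"] inEG edges j by auto
    ultimately show "sig m r (b j) < 2 ^ n" using sigeq inEG j by simp
  qed
  have gen: "\<And>m w (u::nat). w \<in> {x i, y i} \<Longrightarrow> u < 2 ^ n \<Longrightarrow> \<exists>r. admissible EG ?Forb cap n r \<and>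
      sig m r w = u \<and> (\<forall>e\<in>EG - {w, b i}. sig m r e = sig m (\<lambda>_. 0) e)"
  proof -
    fix m w and u :: nat assume w: "w \<in> {x i, y i}" and u: "u < 2 ^ n"
    have wEG: "w \<in> EG" and hw: "headv w = B i" and tw: "tailv w = A i" and cw: "cap w = 1"
      using w inEGi Ei by auto
    have w0lt: "sig m (\<lambda>_. 0) w < 2 ^ n" using w lt_x lt_y by auto
    define v where "v = Bit_Operations.xor (sig m (\<lambda>_. 0) w) u"
    define r where "r = (\<lambda>e. if e = w then v else 0)"
    have vlt: "v < 2 ^ n" unfolding v_def using xor_lt[OF w0lt u] .
    have wF: "w \<notin> ?Forb"
    proof
      assume "w \<in> ?Forb"
      then obtain j where j: "j \<in> ?K" "w = a j \<or> w = b j" by auto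
      have "headv (a j) = A j" "headv (b j) = t" using edges j by auto
      moreover have "A j \<noteq> B i" using ABdisj j i by (metis IntI emptyE image_eqI)
      ultimately show False using j hw Ai by auto
    qed
    have adm: "admissible EG ?Forb cap n r"
      unfolding admissible_def r_def using wEG wF vlt cw by auto
    have l1: "\<forall>e\<in>EG. \<forall>f g. (\<forall>d\<in>EG. headv d = tailv e \<longrightarrow> f d = g d) \<longrightarrow> enc e f m = enc e g m"
      using loc by blast
    have s1: "\<forall>e\<in>EG. sig m r e = Bit_Operations.xor (enc e (sig m r) m) (r e)" using sigeq by blast
    have s2: "\<forall>e\<in>EG. sig m (\<lambda>_. 0) e = Bit_Operations.xor (enc e (sig m (\<lambda>_. 0)) m) ((\<lambda>_. 0) e)"
      using sigeq by blast
    have Dd: "\<forall>e\<in>EG - {w, b i}. r e = (\<lambda>_. 0) e \<and> (\<forall>d\<in>EG. headv d = tailv e \<longrightarrow> d \<notin> {w, b i})"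
    proof (intro ballI conjI impI)
      fix e assume e: "e \<in> EG - {w, b i}"
      then show "r e = (\<lambda>_. 0) e" unfolding r_def by simp
      fix d assume d: "d \<in> EG" "headv d = tailv e"
      show "d \<notin> {w, b i}"
      proof
        assume "d \<in> {w, b i}"
        then consider "d = w" | "d = b i" by blast
        then show False
        proof cases
          case 1 then have "tailv e = B i" using d hw by simp
          then show False using outB e by blast
        next
          case 2 then have "tailv e = t" using d Ei(10) by simp
          then show False using noout_t e by blast
        qed
      qed
    qed
    have agree: "\<And>e. e \<in> EG - {w, b i} \<Longrightarrow> sig m r e = sig m (\<lambda>_. 0) e"
      by (rule sig_agree[where fa="sig m r" and fb="sig m (\<lambda>_. 0)" and ra=r and rb="\<lambda>_. 0" and EG=EG and headv=headv and tailv=tailv and enc=enc and m=m and D="{w, b i}", OF wfR l1 s1 s2 Dd])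
    have "enc w (sig m r) m = enc w (sig m (\<lambda>_. 0)) m"
    proof (rule loc[OF wEG])
      show "\<forall>d\<in>EG. headv d = tailv w \<longrightarrow> sig m r d = sig m (\<lambda>_. 0) d"
      proof (intro ballI impI)
        fix d assume d: "d \<in> EG" "headv d = tailv w"
        have "d \<noteq> w" using d tw hw AiBi by auto
        moreover have "d \<noteq> b i" using d tw Ei(10) Ai(3) by auto
        ultimately show "sig m r d = sig m (\<lambda>_. 0) d" using agree d by blast
      qed
    qed simp
    then have "sig m r w = Bit_Operations.xor (sig m (\<lambda>_. 0) w) v"
      using sigeq[OF wEG, of m r] sig0[OF wEG, of m] unfolding r_def by simp
    also have "\<dots> = u" unfolding v_def by (simp add: xor.assoc[symmetric])
    finally show "\<exists>r. admissible EG ?Forb cap n r \<and>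
      sig m r w = u \<and> (\<forall>e\<in>EG - {w, b i}. sig m r e = sig m (\<lambda>_. 0) e)"
      using adm agree by blast
  qed
  define bt where "bt m r = map (\<lambda>j. sig m r (b j)) [1..<k+1]" for m r
  define NA where "NA m = (\<forall>r. admissible EG ?Forb cap n r \<longrightarrow> bt m r = bt m (\<lambda>_. 0))" for m
  have NAb: "\<And>m r. NA m \<Longrightarrow> admissible EG ?Forb cap n r \<Longrightarrow> sig m r (b i) = sig m (\<lambda>_. 0) (b i)"
  proof -
    fix m r assume "NA m" "admissible EG ?Forb cap n r"
    then have "bt m r ! (i - 1) = bt m (\<lambda>_. 0) ! (i - 1)" unfolding NA_def by simp
    moreover have "[1..<k+1] ! (i - 1) = i" "i - 1 < length [1..<k+1]" using i by (auto simp del: upt_Suc simp add: nth_upt)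
    ultimately show "sig m r (b i) = sig m (\<lambda>_. 0) (b i)" unfolding bt_def by simp
  qed
  have swap: "\<And>m m'. NA m \<Longrightarrow> NA m' \<Longrightarrow> sig m (\<lambda>_. 0) (z' i) = sig m' (\<lambda>_. 0) (z' i) \<Longrightarrow>
      sig m (\<lambda>_. 0) (b i) = sig m' (\<lambda>_. 0) (b i)"
  proof -
    fix m m' assume na: "NA m" "NA m'" and zz: "sig m (\<lambda>_. 0) (z' i) = sig m' (\<lambda>_. 0) (z' i)"
    obtain r1 where r1: "admissible EG ?Forb cap n r1" "sig m r1 (x i) = sig m' (\<lambda>_. 0) (x i)"
      "\<forall>e\<in>EG - {x i, b i}. sig m r1 e = sig m (\<lambda>_. 0) e"
      using gen[of "x i" "sig m' (\<lambda>_. 0) (x i)" m] lt_x by blast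
    obtain r2 where r2: "admissible EG ?Forb cap n r2" "sig m' r2 (y i) = sig m (\<lambda>_. 0) (y i)"
      "\<forall>e\<in>EG - {y i, b i}. sig m' r2 e = sig m' (\<lambda>_. 0) e"
      using gen[of "y i" "sig m (\<lambda>_. 0) (y i)" m'] lt_y by blast
    have ne: "y i \<noteq> b i" "x i \<noteq> b i" "z' i \<noteq> x i" "z' i \<noteq> y i" "z' i \<noteq> b i"
      using Ei Ai tNi by auto
    have "enc (b i) (sig m r1) m = enc (b i) (sig m' r2) m'"
    proof (rule loc[OF inEGi(5)])
      show "\<forall>d\<in>EG. headv d = tailv (b i) \<longrightarrow> sig m r1 d = sig m' r2 d"
      proof (intro ballI impI)
        fix d assume d: "d \<in> EG" "headv d = tailv (b i)"
        then have "d = x i \<or> d = y i \<or> d = z' i" using inB Ei by auto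
        then show "sig m r1 d = sig m' r2 d"
          using r1 r2 ne xy zz inEGi by auto
      qed
      show "tailv (b i) \<noteq> s \<or> m = m'" using Ei Ai by auto
    qed
    moreover have "r1 (b i) = 0" "r2 (b i) = 0" using r1(1) r2(1) i unfolding admissible_def by auto
    ultimately have "sig m r1 (b i) = sig m' r2 (b i)" using sigeq[OF inEGi(5)] by simp
    then show "sig m (\<lambda>_. 0) (b i) = sig m' (\<lambda>_. 0) (b i)" using NAb na r1(1) r2(1) by metis
  qed
  have Good_iff: "\<And>m. m \<in> Good \<longleftrightarrow> m < 2^(k*n) \<and> (\<forall>r. admissible EG ?Forb cap n r \<longrightarrow> dec (bt m r) = m)"
    unfolding Good_def good_msgs_def EG_def bt_def by auto
  have finGood: "finite Good"
    by (rule finite_subset[of Good "{..<2^(k*n)}"]) (use Good_iff in auto)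
  define Alt where "Alt = {m \<in> Good. \<not> NA m}"
  define rr where "rr m = (SOME r. admissible EG ?Forb cap n r \<and> bt m r \<noteq> bt m (\<lambda>_. 0))" for m
  have rr: "\<And>m. m \<in> Alt \<Longrightarrow> admissible EG ?Forb cap n (rr m) \<and> bt m (rr m) \<noteq> bt m (\<lambda>_. 0)"
  proof -
    fix m assume "m \<in> Alt"
    then have "\<exists>r. admissible EG ?Forb cap n r \<and> bt m r \<noteq> bt m (\<lambda>_. 0)"
      unfolding Alt_def NA_def by auto
    then show "admissible EG ?Forb cap n (rr m) \<and> bt m (rr m) \<noteq> bt m (\<lambda>_. 0)"
      unfolding rr_def by (rule someI_ex)
  qed
  define W where "W = {xs. set xs \<subseteq> {..<(2::nat)^n} \<and> length xs = k}"
  have cardW: "card W = 2 ^ (k * n)" unfolding W_def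
    by (simp add: card_lists_length_eq power_mult[symmetric] mult.commute)
  have finW: "finite W" unfolding W_def by (simp add: finite_lists_length_eq)
  have btW: "\<And>m r. admissible EG ?Forb cap n r \<Longrightarrow> bt m r \<in> W"
    unfolding W_def bt_def using lt_b by auto
  let ?P = "(\<lambda>m. bt m (\<lambda>_. 0)) ` Good"
  let ?Q = "(\<lambda>m. bt m (rr m)) ` Alt"
  have injP: "inj_on (\<lambda>m. bt m (\<lambda>_. 0)) Good"
    by (rule inj_onI) (metis Good_iff adm0)
  have injQ: "inj_on (\<lambda>m. bt m (rr m)) Alt"
    by (rule inj_onI) (metis Good_iff rr Alt_def mem_Collect_eq)
  have disj: "?P \<inter> ?Q = {}"
  proof (rule ccontr)
    assume "?P \<inter> ?Q \<noteq> {}"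
    then obtain m m' where mm: "m \<in> Good" "m' \<in> Alt" "bt m (\<lambda>_. 0) = bt m' (rr m')" by blast
    have "m' \<in> Good" using mm Alt_def by auto
    have "dec (bt m (\<lambda>_. 0)) = m" using mm Good_iff adm0 by blast
    moreover have "dec (bt m' (rr m')) = m'" using \<open>m' \<in> Good\<close> Good_iff rr[OF mm(2)] by blast
    ultimately have "m = m'" using mm by simp
    then show False using rr[OF mm(2)] mm by simp
  qed
  have "card ?P + card ?Q = card (?P \<union> ?Q)"
    using disj finGood Alt_def by (simp add: card_Un_disjoint)
  also have "\<dots> \<le> card W" using btW adm0 rr finW by (intro card_mono) auto
  finally have cnt: "card Good + card Alt \<le> 2 ^ (k * n)"
    using card_image[OF injP] card_image[OF injQ] cardW by simp
  let ?zz = "\<lambda>m. sig m (\<lambda>_. 0) (z' i)"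
  let ?bb = "\<lambda>m. sig m (\<lambda>_. 0) (b i)"
  define Mp where "Mp = {m \<in> Good. psi (?zz m) \<noteq> ?bb m}"
  have finAlt: "finite Alt" using finGood Alt_def by simp
  have finMp: "finite Mp" using finGood Mp_def by simp
  have cls: "\<And>zh. zh < 2 ^ n \<Longrightarrow> card {m \<in> Mp. ?zz m = zh} \<le> card {m \<in> Alt. ?zz m = zh}"
  proof -
    fix zh :: nat assume zh: "zh < 2 ^ n"
    show "card {m \<in> Mp. ?zz m = zh} \<le> card {m \<in> Alt. ?zz m = zh}"
    proof (cases "\<exists>m0\<in>Good. ?zz m0 = zh \<and> NA m0 \<and> ?bb m0 \<noteq> psi zh")
      case False
      have "{m \<in> Mp. ?zz m = zh} \<subseteq> {m \<in> Alt. ?zz m = zh}"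
      proof
        fix m assume m: "m \<in> {m \<in> Mp. ?zz m = zh}"
        then have mG: "m \<in> Good" "?zz m = zh" "psi zh \<noteq> ?bb m" unfolding Mp_def by auto
        have "\<not> NA m" using False mG by metis
        then show "m \<in> {m \<in> Alt. ?zz m = zh}" unfolding Alt_def using mG by simp
      qed
      then show ?thesis using finAlt by (intro card_mono) auto
    next
      case True
      then obtain m0 where m0: "m0 \<in> Good" "?zz m0 = zh" "NA m0" "?bb m0 \<noteq> psi zh" by blast
      define beta where "beta = ?bb m0"
      have blt: "beta < 2 ^ n" unfolding beta_def using lt_b[OF adm0 i] .
      have NAbeta: "\<And>m. ?zz m = zh \<Longrightarrow> NA m \<Longrightarrow> ?bb m = beta"
      proof -
        fix m assume "?zz m = zh" "NA m"
        then show "?bb m = beta" unfolding beta_def using swap[of m m0] m0(2,3) by simp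
      qed
      let ?A1 = "{m \<in> Alt. ?zz m = zh \<and> ?bb m \<noteq> psi zh}"
      let ?A2 = "{m \<in> Alt. ?zz m = zh \<and> ?bb m = psi zh}"
      let ?Gb = "{m \<in> Good. ?zz m = zh \<and> ?bb m = beta}"
      let ?Gp = "{m \<in> Good. ?zz m = zh \<and> ?bb m = psi zh}"
      have sub1: "{m \<in> Mp. ?zz m = zh} \<subseteq> ?A1 \<union> ?Gb"
      proof
        fix m assume m: "m \<in> {m \<in> Mp. ?zz m = zh}"
        then have mG: "m \<in> Good" "?zz m = zh" "psi zh \<noteq> ?bb m" unfolding Mp_def by auto
        show "m \<in> ?A1 \<union> ?Gb"
        proof (cases "NA m")
          case True then show ?thesis using NAbeta mG by simp
        next
          case False then show ?thesis using mG unfolding Alt_def by simp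
        qed
      qed
      have GpA2: "?Gp = ?A2"
      proof
        show "?Gp \<subseteq> ?A2"
        proof
          fix m assume m: "m \<in> ?Gp"
          then have mG: "m \<in> Good" "?zz m = zh" "?bb m = psi zh" by auto
          have "\<not> NA m"
          proof
            assume "NA m"
            then have "?bb m = beta" using NAbeta mG by simp
            then show False using mG m0(4) beta_def by simp
          qed
          then show "m \<in> ?A2" unfolding Alt_def using mG by simp
        qed
        show "?A2 \<subseteq> ?Gp" unfolding Alt_def by auto
      qed
      have "card {m \<in> Mp. ?zz m = zh} \<le> card (?A1 \<union> ?Gb)"
        using finGood finAlt sub1 by (intro card_mono) auto
      also have "\<dots> \<le> card ?A1 + card ?Gb" by (rule card_Un_le)
      also have "card ?Gb \<le> card ?Gp" using psi zh blt by blast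
      also have "card ?Gp = card ?A2" using GpA2 by simp
      also have "card ?A1 + card ?A2 = card (?A1 \<union> ?A2)"
        using finAlt by (intro card_Un_disjoint[symmetric]) auto
      also have "?A1 \<union> ?A2 = {m \<in> Alt. ?zz m = zh}" by auto
      finally show ?thesis by simp
    qed
  qed
  have part: "\<And>S. finite S \<Longrightarrow> card S = (\<Sum>zh<(2::nat)^n. card {m \<in> S. ?zz m = zh})"
  proof -
    fix S :: "nat set" assume fS: "finite S"
    have "S = (\<Union>zh\<in>{..<2^n}. {m \<in> S. ?zz m = zh})" using lt_z by auto
    then have "card S = card (\<Union>zh\<in>{..<2^n}. {m \<in> S. ?zz m = zh})" by simp
    also have "\<dots> = (\<Sum>zh<(2::nat)^n. card {m \<in> S. ?zz m = zh})"
      using fS by (intro card_UN_disjoint) auto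
    finally show "card S = (\<Sum>zh<(2::nat)^n. card {m \<in> S. ?zz m = zh})" .
  qed
  have "card Mp \<le> card Alt"
    unfolding part[OF finMp] part[OF finAlt] using cls by (intro sum_mono) auto
  then have "card Mp + card Good \<le> 2 ^ (k * n)" using cnt by simp
  then have "real (card Mp) + real (card Good) \<le> 2 ^ (k * n)"
    by (metis of_nat_add of_nat_le_iff of_nat_numeral of_nat_power)
  then have "real (card Mp) \<le> eps * 2 ^ (k * n)" using good_large by (simp add: algebra_simps)
  moreover have "eps * 2 ^ (k * n) \<le> 2 * eps * 2 ^ (k * n)" using eps by simp
  ultimately show ?thesis unfolding Mp_def by simp
qed

end
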